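(* Let $A>1$ and let $\mathcal{D}_A=\{(\mathbf f,\mathbf g,\mathbf F,\mathbf G,\mathbf u,\mathbf v)\in\mathbb{R}^6:\ \mathbf u,\mathbf v>0,\ 1\le\mathbf u\mathbf v\le A,\ \mathbf f^2\le\mathbf F\mathbf v,\ \mathbf g^2\le\mathbf G\mathbf u\}$. If $X,X_+,X_-\in\mathcal{D}_A$ and $X=(X_++X_-)/2$, then for every $\theta\in(0,1)$ the point $\theta X_++(1-\theta)X_-$ belongs to $\mathcal{D}_{A'}$, where $A'=9A/8$. *)

theory Defs
  imports Complex_Main
begin

type_synonym pt6 = "real \<times> real \<times> real \<times> real \<times> real \<times> real"

definition inD :: "real \<Rightarrow> pt6 \<Rightarrow> bool" where
  "inD A X = (case X of (f, g, F, G, u, v) \<Rightarrow>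
      u > 0 \<and> v > 0 \<and> 1 \<le> u * v \<and> u * v \<le> A \<and> f\<^sup>2 \<le> F * v \<and> g\<^sup>2 \<le> G * u)"

definition comb :: "real \<Rightarrow> pt6 \<Rightarrow> pt6 \<Rightarrow> pt6" where
  "comb t X Y = (case X of (f1, g1, F1, G1, u1, v1) \<Rightarrow> case Y of (f2, g2, F2, G2, u2, v2) \<Rightarrow>
     (t*f1 + (1-t)*f2, t*g1 + (1-t)*g2, t*F1 + (1-t)*F2, t*G1 + (1-t)*G2,
      t*u1 + (1-t)*u2, t*v1 + (1-t)*v2))"

end

theory Submission
  imports Defs
begin

lemma cs_aux:
  fixes a b f1 f2 F1 F2 v1 v2 :: real
  assumes a: "a \<ge> 0" and b: "b \<ge> 0" and v1: "v1 > 0" and v2: "v2 > 0"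
    and h1: "f1\<^sup>2 \<le> F1 * v1" and h2: "f2\<^sup>2 \<le> F2 * v2"
  shows "(a*f1 + b*f2)\<^sup>2 \<le> (a*F1 + b*F2) * (a*v1 + b*v2)"
proof -
  have e: "(a*f1^2/v1 + b*f2^2/v2) * (a*v1 + b*v2) - (a*f1 + b*f2)\<^sup>2
        = a*b*(f1*v2 - f2*v1)\<^sup>2 / (v1*v2)"
    using v1 v2 by (simp add: field_simps power2_eq_square)
  have "a*b*(f1*v2 - f2*v1)\<^sup>2 / (v1*v2) \<ge> 0" using a b v1 v2 by simp
  hence 1: "(a*f1 + b*f2)\<^sup>2 \<le> (a*f1^2/v1 + b*f2^2/v2) * (a*v1 + b*v2)" using e by linarith
  have "f1^2/v1 \<le> F1" using h1 v1 by (simp add: divide_le_eq)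
  moreover have "f2^2/v2 \<le> F2" using h2 v2 by (simp add: divide_le_eq)
  ultimately have "a*f1^2/v1 + b*f2^2/v2 \<le> a*F1 + b*F2"
    using a b by (metis add_mono mult_left_mono times_divide_eq_right)
  moreover have "a*v1 + b*v2 \<ge> 0" using a b v1 v2 by simp
  ultimately have "(a*f1^2/v1 + b*f2^2/v2) * (a*v1 + b*v2) \<le> (a*F1 + b*F2) * (a*v1 + b*v2)"
    by (rule mult_right_mono)
  with 1 show ?thesis by linarith
qed

lemma prod_lower:
  fixes t u1 u2 v1 v2 :: real
  assumes "0 < t" "t < 1" "u1 > 0" "u2 > 0" "v1 > 0" "v2 > 0" "1 \<le> u1*v1" "1 \<le> u2*v2"
  shows "1 \<le> (t*u1 + (1-t)*u2) * (t*v1 + (1-t)*v2)"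
proof -
  define p where "p = u1*v2" define q where "q = u2*v1"
  have pqe: "p*q = (u1*v1)*(u2*v2)" unfolding p_def q_def by (simp add: algebra_simps)
  have "(1::real)*1 \<le> (u1*v1)*(u2*v2)" using assms by (intro mult_mono) auto
  hence pq: "p*q \<ge> 1" using pqe by simp
  have pp: "p > 0" "q > 0" unfolding p_def q_def using assms by auto
  have "p + q \<ge> 2"
  proof -
    have "(p - q)^2 \<ge> 0" by simp
    hence "(p+q)^2 \<ge> 4*(p*q)" by (simp add: power2_eq_square algebra_simps)
    hence "(p+q)^2 \<ge> 2^2" using pq by simp
    thus ?thesis using power2_le_imp_le[of 2 "p+q"] pp by simp
  qed
  have e: "(t*u1 + (1-t)*u2) * (t*v1 + (1-t)*v2) = t^2*(u1*v1) + (1-t)^2*(u2*v2) + t*(1-t)*(p+q)"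
    unfolding p_def q_def by (simp add: power2_eq_square algebra_simps)
  have "t^2*(u1*v1) \<ge> t^2" using assms by simp
  moreover have "(1-t)^2*(u2*v2) \<ge> (1-t)^2" using assms by simp
  moreover have "t*(1-t)*(p+q) \<ge> t*(1-t)*2" using assms \<open>p+q\<ge>2\<close>
    by (intro mult_left_mono) auto
  moreover have "t^2 + (1-t)^2 + t*(1-t)*2 = 1" by (simp add: power2_eq_square algebra_simps)
  ultimately show ?thesis using e by linarith
qed

lemma prod_upper:
  fixes t u1 u2 v1 v2 A :: real
  assumes "0 < t" "t < 1" "u1 > 0" "u2 > 0" "v1 > 0" "v2 > 0"
    "u1*v1 \<le> A" "u2*v2 \<le> A"
    "(1/2*u1 + (1-1/2)*u2) * (1/2*v1 + (1-1/2)*v2) \<le> A"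
  shows "(t*u1 + (1-t)*u2) * (t*v1 + (1-t)*v2) \<le> 9*A/8"
proof -
  define a where "a = u1*v1" define b where "b = u2*v2"
  define S where "S = u1*v2 + u2*v1"
  have S: "S \<le> 4*A - a - b" using assms(9) unfolding a_def b_def S_def
    by (simp add: algebra_simps)
  have a0: "a > 0" "b > 0" unfolding a_def b_def using assms by auto
  have e: "(t*u1 + (1-t)*u2) * (t*v1 + (1-t)*v2) = t^2*a + (1-t)^2*b + t*(1-t)*S"
    unfolding a_def b_def S_def by (simp add: power2_eq_square algebra_simps)
  have "t*(1-t)*S \<le> t*(1-t)*(4*A - a - b)" using S assms by simp
  hence 1: "(t*u1 + (1-t)*u2) * (t*v1 + (1-t)*v2) \<le> a*t*(2*t-1) + b*(1-t)*(1-2*t) + 4*A*t*(1-t)"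
    using e by (simp add: power2_eq_square algebra_simps)
  have sq: "A*(3*t - 2*t^2) \<le> 9*A/8" and sq2: "A*(1 + t - 2*t^2) \<le> 9*A/8"
  proof -
    have "A \<ge> 0" using assms a0 unfolding a_def by linarith
    moreover have "3*t - 2*t^2 \<le> 9/8"
    proof -
      have "2*(t-3/4)^2 = 2*t^2 - 3*t + 9/8" by (simp add: power2_eq_square algebra_simps)
      moreover have "(t-3/4)^2 \<ge> 0" by simp
      ultimately show ?thesis by linarith
    qed
    moreover have "1 + t - 2*t^2 \<le> 9/8"
    proof -
      have "2*(t-1/4)^2 = 2*t^2 - t + 1/8" by (simp add: power2_eq_square algebra_simps)
      moreover have "(t-1/4)^2 \<ge> 0" by simp
      ultimately show ?thesis by linarith
    qed
    ultimately have "A*(3*t - 2*t^2) \<le> A*(9/8)" "A*(1 + t - 2*t^2) \<le> A*(9/8)"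
      by (meson mult_left_mono)+
    thus "A*(3*t - 2*t^2) \<le> 9*A/8" "A*(1 + t - 2*t^2) \<le> 9*A/8" by simp_all
  qed
  show ?thesis
  proof (cases "t \<ge> 1/2")
    case True
    have "a*t*(2*t-1) \<le> A*t*(2*t-1)" using True assms unfolding a_def
      by (simp add: mult_right_mono)
    moreover have "b*(1-t)*(1-2*t) \<le> 0" using True assms a0
      by (simp add: mult_nonneg_nonpos)
    ultimately have "(t*u1 + (1-t)*u2) * (t*v1 + (1-t)*v2) \<le> A*(3*t - 2*t^2)"
      using 1 by (simp add: power2_eq_square algebra_simps)
    thus ?thesis using sq by linarith
  next
    case False
    have "b*(1-t)*(1-2*t) \<le> A*(1-t)*(1-2*t)" using False assms unfolding b_def
      by (simp add: mult_right_mono)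
    moreover have "a*t*(2*t-1) \<le> 0" using False assms a0
      by (simp add: mult_nonneg_nonpos)
    ultimately have "(t*u1 + (1-t)*u2) * (t*v1 + (1-t)*v2) \<le> A*(1 + t - 2*t^2)"
      using 1 by (simp add: power2_eq_square algebra_simps)
    thus ?thesis using sq2 by linarith
  qed
qed

theorem lemma5p1:
  fixes A \<theta> :: real and X Xp Xm :: pt6
  assumes "A > 1"
    and "inD A X" and "inD A Xp" and "inD A Xm"
    and "X = comb (1/2) Xp Xm"
    and "0 < \<theta>" and "\<theta> < 1"
  shows "inD (9 * A / 8) (comb \<theta> Xp Xm)"
proof -
  obtain f1 g1 F1 G1 u1 v1 where p: "Xp = (f1, g1, F1, G1, u1, v1)" by (cases Xp) auto
  obtain f2 g2 F2 G2 u2 v2 where m: "Xm = (f2, g2, F2, G2, u2, v2)" by (cases Xm) auto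
  have hp: "u1 > 0" "v1 > 0" "1 \<le> u1*v1" "u1*v1 \<le> A" "f1\<^sup>2 \<le> F1*v1" "g1\<^sup>2 \<le> G1*u1"
    using assms(3) p by (auto simp: inD_def)
  have hm: "u2 > 0" "v2 > 0" "1 \<le> u2*v2" "u2*v2 \<le> A" "f2\<^sup>2 \<le> F2*v2" "g2\<^sup>2 \<le> G2*u2"
    using assms(4) m by (auto simp: inD_def)
  have hx: "(1/2*u1 + (1-1/2)*u2) * (1/2*v1 + (1-1/2)*v2) \<le> A"
    using assms(2) assms(5) p m by (simp add: inD_def comb_def)
  have t: "\<theta> \<ge> 0" "1 - \<theta> \<ge> 0" using assms by auto
  have pos: "\<theta>*u1 + (1-\<theta>)*u2 > 0" "\<theta>*v1 + (1-\<theta>)*v2 > 0"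
    using assms(6,7) hp hm by (smt (verit) mult_pos_pos)+
  have g: "(\<theta>*g1 + (1-\<theta>)*g2)\<^sup>2 \<le> (\<theta>*G1 + (1-\<theta>)*G2) * (\<theta>*u1 + (1-\<theta>)*u2)"
    by (rule cs_aux[OF t hp(1) hm(1) hp(6) hm(6)])
  have f: "(\<theta>*f1 + (1-\<theta>)*f2)\<^sup>2 \<le> (\<theta>*F1 + (1-\<theta>)*F2) * (\<theta>*v1 + (1-\<theta>)*v2)"
    by (rule cs_aux[OF t hp(2) hm(2) hp(5) hm(5)])
  show ?thesis
    unfolding p m comb_def inD_def
    using pos f g prod_lower[OF assms(6,7) hp(1) hm(1) hp(2) hm(2) hp(3) hm(3)]
      prod_upper[OF assms(6,7) hp(1) hm(1) hp(2) hm(2) hp(4) hm(4) hx]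
    by simp
qed

end
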